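(* Let $\alpha\in[1,2)$, $\nu_\alpha=\frac{\alpha-1}{2-\alpha}$, $\kappa_\alpha=\frac{2-\alpha}2$, and $m\ge1$. The functions $$\Phi^{(r)}_{\alpha,m}(x)=\begin{cases}x^{\frac{1-\alpha}2}J_{\nu_\alpha}(j_{\nu_\alpha,m}x^{\kappa_\alpha}) & x\in(0,1)\\0 & x\in(-1,0)\end{cases},\qquad \Phi^{(l)}_{\alpha,m}(x)=\begin{cases}0 & x\in(0,1)\\ |x|^{\frac{1-\alpha}2}J_{\nu_\alpha}(j_{\nu_\alpha,m}|x|^{\kappa_\alpha}) & x\in(-1,0)\end{cases}$$ belong to $H^2_\alpha(-1,1)$.
   Context: Let $\alpha\in[1,2)$. $H^1_\alpha(-1,1)$ is the set of $u\in L^2(-1,1)$ locally absolutely continuous on $(0,1]$ and on $[-1,0)$, with $\int_{-1}^1|x|^\alpha u_x^2\,dx<\infty$ and $u(-1)=0=u(1)$; $H^2_\alpha(-1,1)=\{u\in H^1_\alpha(-1,1):(|x|^\alpha u')'\in L^2(-1,1)\}$ (distributional derivative on $(-1,1)$). $J_\nu$ is the Bessel function of the first kind of order $\nu$ and $0<j_{\nu,1}<j_{\nu,2}<\cdots$ its positive zeros. *)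

theory Defs
  imports "HOL-Analysis.Analysis"
begin

definition bessel_J :: "real \<Rightarrow> real \<Rightarrow> real" where
  "bessel_J nu x = (\<Sum>k. (-1) ^ k / (fact k * Gamma (real k + nu + 1)) * (x / 2) powr (2 * real k + nu))"

text \<open>The m-th positive zero j_{nu,m} of J_nu (m >= 1), zeros ordered increasingly.\<close>
definition bessel_zero :: "real \<Rightarrow> nat \<Rightarrow> real" where
  "bessel_zero nu m = (THE z. 0 < z \<and> bessel_J nu z = 0 \<and>
      card {y. 0 < y \<and> y < z \<and> bessel_J nu y = 0} = m - 1)"

definition abs_cont_on :: "real set \<Rightarrow> (real \<Rightarrow> real) \<Rightarrow> bool" where
  "abs_cont_on I u \<longleftrightarrow> (\<forall>\<epsilon>>0. \<exists>\<delta>>0. \<forall>(n::nat) (a::nat \<Rightarrow> real) b.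
      (\<forall>k<n. a k \<le> b k \<and> {a k..b k} \<subseteq> I) \<and>
      (\<forall>k<n. \<forall>l<n. k \<noteq> l \<longrightarrow> b k \<le> a l \<or> b l \<le> a k) \<and>
      (\<Sum>k<n. b k - a k) < \<delta> \<longrightarrow> (\<Sum>k<n. \<bar>u (b k) - u (a k)\<bar>) < \<epsilon>)"

definition loc_abs_cont_on :: "real set \<Rightarrow> (real \<Rightarrow> real) \<Rightarrow> bool" where
  "loc_abs_cont_on I u \<longleftrightarrow> (\<forall>a b. a \<le> b \<and> {a..b} \<subseteq> I \<longrightarrow> abs_cont_on {a..b} u)"

definition L2_11 :: "(real \<Rightarrow> real) \<Rightarrow> bool" where
  "L2_11 u \<longleftrightarrow> set_integrable lebesgue {-1<..<1} (\<lambda>x. (u x)\<^sup>2)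
      \<and> set_borel_measurable lebesgue {-1<..<1} u"

definition ae_deriv :: "(real \<Rightarrow> real) \<Rightarrow> (real \<Rightarrow> real) \<Rightarrow> bool" where
  "ae_deriv u g \<longleftrightarrow> (AE x in lebesgue. x \<in> {-1<..<1} \<longrightarrow> (u has_real_derivative g x) (at x))"

definition H1_alpha :: "real \<Rightarrow> (real \<Rightarrow> real) set" where
  "H1_alpha \<alpha> = {u. L2_11 u \<and> loc_abs_cont_on {0<..1} u \<and> loc_abs_cont_on {-1..<0} u \<and>
      (\<exists>g. ae_deriv u g \<and> set_integrable lebesgue {-1<..<1} (\<lambda>x. \<bar>x\<bar> powr \<alpha> * (g x)\<^sup>2)) \<and>
      u (-1) = 0 \<and> u 1 = 0}"

definition test_fun :: "(real \<Rightarrow> real) \<Rightarrow> bool" where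
  "test_fun \<phi> \<longleftrightarrow> (\<forall>k x. ((deriv ^^ k) \<phi>) differentiable (at x)) \<and>
      (\<exists>a b. -1 < a \<and> a \<le> b \<and> b < 1 \<and> (\<forall>x. x \<notin> {a..b} \<longrightarrow> \<phi> x = 0))"

text \<open>H^2_alpha: (|x|^alpha u')' (distributional derivative on (-1,1)) lies in L^2(-1,1).\<close>
definition H2_alpha :: "real \<Rightarrow> (real \<Rightarrow> real) set" where
  "H2_alpha \<alpha> = {u. u \<in> H1_alpha \<alpha> \<and>
      (\<exists>g w. ae_deriv u g \<and> L2_11 w \<and>
        (\<forall>\<phi>. test_fun \<phi> \<longrightarrow>
           (LINT x:{-1<..<1}|lebesgue. \<bar>x\<bar> powr \<alpha> * g x * deriv \<phi> x)
             = - (LINT x:{-1<..<1}|lebesgue. w x * \<phi> x)))}"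

definition nu_a :: "real \<Rightarrow> real" where "nu_a \<alpha> = (\<alpha> - 1) / (2 - \<alpha>)"
definition kappa_a :: "real \<Rightarrow> real" where "kappa_a \<alpha> = (2 - \<alpha>) / 2"

definition Phi_r :: "real \<Rightarrow> nat \<Rightarrow> real \<Rightarrow> real" where
  "Phi_r \<alpha> m x = (if 0 < x \<and> x < 1 then
      x powr ((1 - \<alpha>) / 2) * bessel_J (nu_a \<alpha>) (bessel_zero (nu_a \<alpha>) m * x powr kappa_a \<alpha>) else 0)"

definition Phi_l :: "real \<Rightarrow> nat \<Rightarrow> real \<Rightarrow> real" where
  "Phi_l \<alpha> m x = (if -1 < x \<and> x < 0 then
      \<bar>x\<bar> powr ((1 - \<alpha>) / 2) * bessel_J (nu_a \<alpha>) (bessel_zero (nu_a \<alpha>) m * \<bar>x\<bar> powr kappa_a \<alpha>) else 0)"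

end

theory Submission
  imports Defs "HOL-Complex_Analysis.Complex_Analysis"
begin

definition bc :: "real \<Rightarrow> nat \<Rightarrow> real" where
  "bc nu k = (-1)^k / (fact k * Gamma (real k + nu + 1)) * (1/4)^k"

definition BP :: "real \<Rightarrow> real \<Rightarrow> real" where "BP nu s = (\<Sum>k. bc nu k * s^k)"
definition BP1 :: "real \<Rightarrow> real \<Rightarrow> real" where "BP1 nu s = (\<Sum>k. diffs (bc nu) k * s^k)"
definition BP2 :: "real \<Rightarrow> real \<Rightarrow> real" where "BP2 nu s = (\<Sum>k. diffs (diffs (bc nu)) k * s^k)"

lemma bc_rec:
  assumes "0 \<le> nu"
  shows "bc nu (Suc k) = - bc nu k / (4 * (real k + 1) * (real k + nu + 1))"
proof -
  have g: "Gamma (real (Suc k) + nu + 1) = (real k + nu + 1) * Gamma (real k + nu + 1)"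
  proof -
    have "real k + nu + 1 \<notin> \<int>\<^sub>\<le>\<^sub>0" using assms by (auto dest: nonpos_Ints_nonpos)
    then show ?thesis using Gamma_plus1[of "real k + nu + 1"] by (simp add: add_ac)
  qed
  have "Gamma (real k + nu + 1) > 0" using assms by auto
  then show ?thesis unfolding bc_def g using assms
    by (simp add: field_simps)
qed

lemma bc_abs_summable:
  assumes "0 \<le> nu" and that: "0 \<le> r"
  shows "summable (\<lambda>n. \<bar>bc nu n\<bar> * r^n)"
proof (rule summable_ratio_test[where c="1/2" and N="nat \<lceil>r\<rceil>"])
  fix n assume n: "nat \<lceil>r\<rceil> \<le> n"
  have rn: "r \<le> real n" using n by linarith
  have "\<bar>bc nu (Suc n)\<bar> = \<bar>bc nu n\<bar> / (4 * (real n + 1) * (real n + nu + 1))"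
    using bc_rec[OF assms(1)] assms(1) by (simp add: abs_divide abs_mult)
  also have "\<dots> \<le> \<bar>bc nu n\<bar> / (4 * (real n + 1))"
    using assms by (intro divide_left_mono mult_pos_pos) auto
  finally have "\<bar>bc nu (Suc n)\<bar> * r \<le> \<bar>bc nu n\<bar> / (4 * (real n + 1)) * r"
    using that by (rule mult_right_mono)
  also have "\<dots> \<le> \<bar>bc nu n\<bar> / 2"
  proof -
    have "r / (4 * (real n + 1)) \<le> 1/2" using rn that by (simp add: field_simps)
    then show ?thesis using mult_left_mono[of "r / (4 * (real n + 1))" "1/2" "\<bar>bc nu n\<bar>"]
      by (simp add: field_simps)
  qed
  finally have fin: "\<bar>bc nu (Suc n)\<bar> * r \<le> \<bar>bc nu n\<bar> / 2" .
  show "norm (\<bar>bc nu (Suc n)\<bar> * r ^ Suc n) \<le> 1/2 * norm (\<bar>bc nu n\<bar> * r ^ n)"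
  proof -
    have "\<bar>bc nu (Suc n)\<bar> * r * r^n \<le> \<bar>bc nu n\<bar> / 2 * r^n"
      using that fin by (intro mult_right_mono) auto
    then show ?thesis using that by (simp add: abs_mult mult_ac)
  qed
qed simp

lemma bc_summable:
  assumes "0 \<le> nu"
  shows "summable (\<lambda>n. bc nu n * s^n)"
proof -
  have "summable (\<lambda>n. \<bar>bc nu n\<bar> * \<bar>s\<bar>^n)" by (rule bc_abs_summable[OF assms]) simp
  then show ?thesis
    by (intro summable_norm_cancel[where f="\<lambda>n. bc nu n * s^n"]) (simp add: abs_mult power_abs)
qed

lemma bc_summable_C:
  assumes "0 \<le> nu"
  shows "summable (\<lambda>n. complex_of_real (bc nu n) * z^n)"
proof -
  have "summable (\<lambda>n. \<bar>bc nu n\<bar> * norm z^n)" by (rule bc_abs_summable[OF assms]) simp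
  then show ?thesis
    by (intro summable_norm_cancel[where f="\<lambda>n. complex_of_real (bc nu n) * z^n"]) (simp add: norm_mult norm_power)
qed

lemma BP_deriv: "0 \<le> nu \<Longrightarrow> (BP nu has_real_derivative BP1 nu s) (at s)"
  unfolding BP_def BP1_def by (rule termdiffs_strong_converges_everywhere) (rule bc_summable)

lemma BP1_deriv: "0 \<le> nu \<Longrightarrow> (BP1 nu has_real_derivative BP2 nu s) (at s)"
  unfolding BP1_def BP2_def
  by (rule termdiffs_strong_converges_everywhere, rule termdiff_converges_all) (rule bc_summable)

lemma BP_ode:
  assumes "0 \<le> nu"
  shows "s * BP2 nu s + (nu + 1) * BP1 nu s + BP nu s / 4 = 0"
proof -
  let ?c = "bc nu" let ?d1 = "diffs ?c" let ?d2 = "diffs ?d1"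
  have s0: "summable (\<lambda>n. ?c n * x^n)" for x by (rule bc_summable[OF assms])
  have s1: "summable (\<lambda>n. ?d1 n * x^n)" for x by (rule termdiff_converges_all, rule s0)
  have s2: "summable (\<lambda>n. ?d2 n * x^n)" for x by (rule termdiff_converges_all, rule s1)
  have "(\<lambda>n. ?d2 n * s^n * s) sums (BP2 nu s * s)"
    unfolding BP2_def by (rule sums_mult2, rule summable_sums, rule s2)
  then have "(\<lambda>n. (\<lambda>n. real n * ?d1 n * s^n) (Suc n)) sums (BP2 nu s * s)"
    by (simp add: diffs_def mult_ac)
  then have A: "(\<lambda>n. real n * ?d1 n * s^n) sums (BP2 nu s * s)"
    by (subst (asm) sums_Suc_iff) simp
  have B: "(\<lambda>n. (nu+1) * (?d1 n * s^n)) sums ((nu+1) * BP1 nu s)"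
    unfolding BP1_def by (rule sums_mult, rule summable_sums, rule s1)
  have C: "(\<lambda>n. ?c n * s^n / 4) sums (BP nu s / 4)"
    unfolding BP_def by (rule sums_divide, rule summable_sums, rule s0)
  have "(\<lambda>n. real n * ?d1 n * s^n + (nu+1) * (?d1 n * s^n) + ?c n * s^n / 4) sums
        (BP2 nu s * s + (nu+1) * BP1 nu s + BP nu s / 4)"
    by (intro sums_add A B C)
  moreover have "real n * ?d1 n * s^n + (nu+1) * (?d1 n * s^n) + ?c n * s^n / 4 = 0" for n
  proof -
    have d: "?d1 n = - ?c n / (4 * (real n + nu + 1))"
    proof -
      have p: "real n + nu + 1 > 0" "real n + 1 > 0" using assms by auto
      have gen: "\<And>a z c. a > 0 \<Longrightarrow> z > 0 \<Longrightarrow> a * (- (c::real) / (4 * a * z)) = - c / (4 * z)"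
        by (simp add: field_simps)
      have "real (Suc n) * bc nu (Suc n) = - ?c n / (4 * (real n + nu + 1))"
        unfolding bc_rec[OF assms, of n] using p by (simp only: of_nat_Suc add.commute[of 1] gen)
      then show ?thesis unfolding diffs_def .
    qed
    have "real n * ?d1 n + (nu+1) * ?d1 n = (real n + nu + 1) * ?d1 n" by (simp add: algebra_simps)
    also have "\<dots> = - ?c n / 4"
    proof -
      have gen: "\<And>z c. z > 0 \<Longrightarrow> z * (- (c::real) / (4*z)) = - c/4" by (simp add: field_simps)
      show ?thesis unfolding d using assms by (intro gen) auto
    qed
    finally have "real n * ?d1 n + (nu+1) * ?d1 n + ?c n / 4 = 0" by simp
    then have "(real n * ?d1 n + (nu+1) * ?d1 n + ?c n / 4) * s^n = 0" by simp
    then show ?thesis by (simp add: algebra_simps)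
  qed
  ultimately have "(\<lambda>n. 0::real) sums (BP2 nu s * s + (nu+1) * BP1 nu s + BP nu s / 4)" by simp
  then show ?thesis using sums_unique2[OF _ sums_zero] by (simp add: mult.commute)
qed

lemma BP_chain[derivative_intros]:
  "0 \<le> nu \<Longrightarrow> (f has_real_derivative f') (at x within S) \<Longrightarrow>
   ((\<lambda>x. BP nu (f x)) has_real_derivative BP1 nu (f x) * f') (at x within S)"
  using DERIV_chain2[OF BP_deriv] by blast

lemma BP1_chain[derivative_intros]:
  "0 \<le> nu \<Longrightarrow> (f has_real_derivative f') (at x within S) \<Longrightarrow>
   ((\<lambda>x. BP1 nu (f x)) has_real_derivative BP2 nu (f x) * f') (at x within S)"
  using DERIV_chain2[OF BP1_deriv] by blast

lemma BP_cont: "0 \<le> nu \<Longrightarrow> isCont (BP nu) s"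
  using BP_deriv DERIV_isCont by blast
lemma BP1_cont: "0 \<le> nu \<Longrightarrow> isCont (BP1 nu) s"
  using BP1_deriv DERIV_isCont by blast
lemma BP_cont_on[continuous_intros]: "0 \<le> nu \<Longrightarrow> continuous_on S f \<Longrightarrow> continuous_on S (\<lambda>x. BP nu (f x))"
  by (rule continuous_on_compose2[OF continuous_at_imp_continuous_on[of UNIV]]) (auto intro: BP_cont)
lemma BP1_cont_on[continuous_intros]: "0 \<le> nu \<Longrightarrow> continuous_on S f \<Longrightarrow> continuous_on S (\<lambda>x. BP1 nu (f x))"
  by (rule continuous_on_compose2[OF continuous_at_imp_continuous_on[of UNIV]]) (auto intro: BP1_cont)

lemma bc0_pos: "0 \<le> nu \<Longrightarrow> bc nu 0 > 0"
  unfolding bc_def by simp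

lemma BP_zeros_finite:
  assumes nu: "0 \<le> nu"
  shows "finite {s. 0 \<le> s \<and> s \<le> R \<and> BP nu s = 0}"
proof (rule ccontr)
  define PC where "PC z = (\<Sum>k. complex_of_real (bc nu k) * z^k)" for z
  assume inf: "infinite {s. 0 \<le> s \<and> s \<le> R \<and> BP nu s = 0}"
  let ?T = "{s. 0 \<le> s \<and> s \<le> R \<and> BP nu s = 0}"
  have holo: "PC holomorphic_on UNIV"
  proof (rule holomorphic_onI)
    fix z :: complex
    have "(PC has_field_derivative (\<Sum>n. diffs (\<lambda>k. complex_of_real (bc nu k)) n * z^n)) (at z)"
      unfolding PC_def by (rule termdiffs_strong_converges_everywhere, rule bc_summable_C[OF nu])
    then show "PC field_differentiable (at z within UNIV)"
      unfolding field_differentiable_def by auto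
  qed
  have real: "PC (of_real s) = of_real (BP nu s)" for s
  proof -
    have "(\<lambda>k. complex_of_real (bc nu k * s^k)) sums of_real (BP nu s)"
      unfolding sums_of_real_iff BP_def by (rule summable_sums, rule bc_summable[OF nu])
    then have "(\<lambda>k. complex_of_real (bc nu k) * (of_real s)^k) sums of_real (BP nu s)"
      by simp
    then show ?thesis unfolding PC_def by (rule sums_unique[symmetric])
  qed
  have inj: "inj_on complex_of_real ?T" by (auto simp: inj_on_def)
  have i1: "infinite (complex_of_real ` ?T)"
    using inf finite_imageD[OF _ inj] by blast
  have i2: "complex_of_real ` ?T \<subseteq> cball 0 R" by auto
  from Heine_Borel_imp_Bolzano_Weierstrass[OF compact_cball i1 i2]
  obtain \<xi> where "\<xi> \<in> cball 0 R" and lim: "\<xi> islimpt (complex_of_real ` ?T)" by blast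
  have z: "\<And>z. z \<in> complex_of_real ` ?T \<Longrightarrow> PC z = 0" using real by auto
  have "PC 0 = 0"
    by (rule analytic_continuation[OF holo open_UNIV connected_UNIV subset_UNIV UNIV_I lim z UNIV_I])
  moreover have "PC 0 = complex_of_real (bc nu 0)" unfolding PC_def by simp
  ultimately show False using bc0_pos[OF nu] by simp
qed

lemma BP_chain_eq[derivative_intros]:
  "0 \<le> nu \<Longrightarrow> (f has_real_derivative f') (at x within S) \<Longrightarrow> D = BP1 nu (f x) * f' \<Longrightarrow>
   ((\<lambda>x. BP nu (f x)) has_real_derivative D) (at x within S)"
  using DERIV_chain2[OF BP_deriv] by blast

lemma BP1_chain_eq:
  "0 \<le> nu \<Longrightarrow> (f has_real_derivative f') (at x within S) \<Longrightarrow> D = BP2 nu (f x) * f' \<Longrightarrow>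
   ((\<lambda>x. BP1 nu (f x)) has_real_derivative D) (at x within S)"
  using DERIV_chain2[OF BP1_deriv] by blast

lemma powr_deriv_eq:
  "0 < x \<Longrightarrow> D = a * x powr (a - 1) \<Longrightarrow> ((\<lambda>y. y powr a) has_real_derivative D) (at x)"
  using has_real_derivative_powr by blast

lemma sturm_zero:
  assumes nu: "0 \<le> nu"
  shows "\<exists>A0>0. \<forall>A\<ge>A0. \<exists>y. A \<le> y \<and> y \<le> A + 2*pi \<and> BP nu (y^2) = 0"
proof -
  define a where "a = nu + 1/2"
  define u where "u y = y powr a * BP nu (y^2)" for y
  define u1 where "u1 y = a * y powr (a-1) * BP nu (y^2) + y powr a * (BP1 nu (y^2) * (2*y))" for y
  define u2 where "u2 y = a * ((a - 1) * y powr (a - 1 - 1)) * BP nu (y^2) + a * y powr (a-1) * (BP1 nu (y^2) * (2*y))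
     + (a * y powr (a - 1) * (BP1 nu (y^2) * (2*y)) + y powr a * (BP2 nu (y^2) * (2*y) * (2*y) + BP1 nu (y^2) * 2))" for y
  have du: "(u has_real_derivative u1 y) (at y)" if y: "y > 0" for y
  proof -
    have "((\<lambda>y. y powr a * BP nu (y^2)) has_real_derivative
        (a * y powr (a-1)) * BP nu (y^2) + y powr a * (BP1 nu (y^2) * (2*y))) (at y)"
      by (intro DERIV_mult has_real_derivative_powr y BP_chain_eq[OF nu] derivative_eq_intros) auto
    then show ?thesis unfolding u_def u1_def by (simp add: mult_ac)
  qed
  have du1: "(u1 has_real_derivative u2 y) (at y)" if y: "y > 0" for y
  proof -
    have "((\<lambda>y. a * y powr (a-1) * BP nu (y^2) + y powr a * (BP1 nu (y^2) * (2*y))) has_real_derivative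
       a * ((a - 1) * y powr (a - 1 - 1)) * BP nu (y^2) + a * y powr (a-1) * (BP1 nu (y^2) * (2*y))
     + (a * y powr (a - 1) * (BP1 nu (y^2) * (2*y)) + y powr a * (BP2 nu (y^2) * (2*y) * (2*y) + BP1 nu (y^2) * 2))) (at y)"
      by (intro DERIV_add DERIV_mult DERIV_cmult has_real_derivative_powr y BP_chain_eq[OF nu]
            BP1_chain_eq[OF nu] derivative_eq_intros) auto
    then show ?thesis unfolding u1_def u2_def .
  qed
  have u2eq: "u2 y = (a * (a - 1) / y^2 - 1) * u y" if y: "y > 0" for y
  proof -
    have ode: "y^2 * BP2 nu (y^2) = - (nu + 1) * BP1 nu (y^2) - BP nu (y^2) / 4"
      using BP_ode[OF nu, of "y^2"] by (simp add: algebra_simps)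
    have p1: "y powr (a - 1) = y powr a / y" using y by (simp add: powr_diff)
    have p2: "y powr (a - 1 - 1) = y powr a / y^2" using y by (simp add: powr_diff power2_eq_square)
    have "u2 y = y powr a * (a * (a - 1) / y^2 * BP nu (y^2) + (4 * a + 2) * BP1 nu (y^2) + 4 * (y^2 * BP2 nu (y^2)))"
      unfolding u2_def p1 p2 using y by (simp add: field_simps power2_eq_square)
    also have "\<dots> = y powr a * ((a * (a - 1) / y^2 - 1) * BP nu (y^2))"
      unfolding ode a_def by (simp add: algebra_simps)
    finally show ?thesis unfolding u_def by (simp add: mult_ac)
  qed
  define A0 where "A0 = 2 * \<bar>a * (a - 1)\<bar> + 2"
  have "A0 > 0" unfolding A0_def by simp
  moreover have "\<exists>y. A \<le> y \<and> y \<le> A + 2*pi \<and> BP nu (y^2) = 0" if A: "A \<ge> A0" for A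
  proof (rule ccontr)
    assume "\<not> ?thesis"
    then have nz: "BP nu (y^2) \<noteq> 0" if "A \<le> y" "y \<le> A + 2*pi" for y using that by blast
    define B where "B = A + 2*pi"
    have A2: "A \<ge> 2" using A unfolding A0_def by simp
    have AB: "A < B" unfolding B_def by simp
    have unz: "u y \<noteq> 0" if "A \<le> y" "y \<le> B" for y
      using nz[of y] that A2 unfolding u_def B_def by simp
    define e where "e = u A"
    have e0: "e \<noteq> 0" using unz[of A] AB unfolding e_def by simp
    have ucont: "continuous_on {A..B} u"
      by (rule has_real_derivative_imp_continuous_on[OF du]) (use A2 in auto)
    have epos: "e * u y > 0" if y: "A \<le> y" "y \<le> B" for y
    proof (rule ccontr)
      assume "\<not> e * u y > 0"
      then have "(\<lambda>t. e * u t) y \<le> 0" by simp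
      moreover have "0 \<le> (\<lambda>t. e * u t) A" unfolding e_def by simp
      moreover have "continuous_on {A..y} (\<lambda>t. e * u t)"
        by (intro continuous_intros continuous_on_subset[OF ucont]) (use y in auto)
      ultimately obtain x where x: "A \<le> x" "x \<le> y" "e * u x = 0"
        using IVT2'[of "\<lambda>t. e * u t" y 0 A] y by auto
      then show False using unz[of x] e0 y by simp
    qed
    define W where "W t = u1 t * sin ((t - A)/2) - u t * (cos ((t - A)/2) / 2)" for t
    define W' where "W' t = (u2 t + u t / 4) * sin ((t - A)/2)" for t
    have dW: "(W has_real_derivative W' t) (at t)" if t: "t > 0" for t
    proof -
      have sd: "((\<lambda>t. sin ((t - A)/2)) has_real_derivative cos ((t - A)/2) / 2) (at t)"
        by (auto intro!: derivative_eq_intros)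
      have cd: "((\<lambda>t. cos ((t - A)/2) / 2) has_real_derivative - sin ((t - A)/2) / 4) (at t)"
        by (auto intro!: derivative_eq_intros)
      show ?thesis using DERIV_diff[OF DERIV_mult[OF du1[OF t] sd] DERIV_mult[OF du[OF t] cd]]
        unfolding W_def W'_def by (simp add: algebra_simps)
    qed
    have dW2: "(W has_real_derivative W' x) (at x)" if "A \<le> x" "x \<le> B" for x
      using dW[of x] A2 that by simp
    from MVT2[OF AB dW2] obtain z where z: "A < z" "z < B" "W B - W A = (B - A) * W' z"
      by blast
    have WA: "W A = - e / 2" unfolding W_def e_def by simp
    have WB: "W B = u B / 2" unfolding W_def B_def by simp
    have ge: "e * (W B - W A) > 0"
    proof -
      have "e * (W B - W A) = (e * u B) / 2 + e * e / 2" unfolding WA WB by (simp add: algebra_simps)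
      moreover have "e * u B > 0" using epos[of B] AB by simp
      moreover have "e * e > 0" using e0 by (simp add: zero_less_mult_iff) linarith
      ultimately show ?thesis by linarith
    qed
    have le: "e * W' z < 0"
    proof -
      have z2: "z \<ge> 2" using z A2 by simp
      have zz: "z \<le> z * z" using z2 mult_right_mono[of 1 z z] by simp
      have "a * (a - 1) < 3/4 * z^2"
      proof -
        have "a * (a - 1) \<le> \<bar>a * (a - 1)\<bar>" by simp
        moreover have "\<bar>a * (a - 1)\<bar> < z / 2" using z A unfolding A0_def by simp
        ultimately show ?thesis using zz z2 unfolding power2_eq_square by linarith
      qed
      then have c: "a * (a - 1) / z^2 - 3/4 < 0" using z2 by (simp add: field_simps)
      have s: "sin ((z - A)/2) > 0" using z unfolding B_def by (intro sin_gt_zero) auto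
      have "e * W' z = ((a * (a - 1) / z^2 - 3/4) * (e * u z)) * sin ((z - A)/2)"
        using z2 unfolding W'_def u2eq[of z, OF order.strict_trans2[OF _ z2, of 0, simplified]] by (simp add: algebra_simps)
      also have "\<dots> < 0"
        using mult_neg_pos[OF mult_neg_pos[OF c epos[of z]] s] z by simp
      finally show ?thesis .
    qed
    have "e * (W B - W A) = (B - A) * (e * W' z)" unfolding z(3) by (simp add: mult_ac)
    moreover have "(B - A) * (e * W' z) < 0" using mult_pos_neg[OF _ le] AB by simp
    ultimately show False using ge by linarith
  qed
  ultimately show ?thesis by blast
qed

lemma enum_exists:
  fixes Q :: "real \<Rightarrow> bool"
  assumes fin: "\<And>R. finite {y. Q y \<and> y \<le> R}" and unb: "\<And>A. \<exists>y. Q y \<and> A \<le> y"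
  shows "\<exists>z. Q z \<and> card {y. Q y \<and> y < z} = n"
proof (induction n)
  case 0
  obtain y0 where y0: "Q y0" using unb by blast
  let ?S = "{y. Q y \<and> y \<le> y0}"
  have S: "finite ?S" "?S \<noteq> {}" using fin y0 by auto
  define z where "z = Min ?S"
  have zS: "z \<in> ?S" unfolding z_def using Min_in[OF S] .
  have "{y. Q y \<and> y < z} = {}"
  proof (rule ccontr)
    assume "{y. Q y \<and> y < z} \<noteq> {}"
    then obtain y where y: "Q y" "y < z" by auto
    then have "y \<in> ?S" using zS by auto
    then have "z \<le> y" unfolding z_def using Min_le[OF S(1)] by blast
    then show False using y by simp
  qed
  then have "card {y. Q y \<and> y < z} = 0" by (metis card.empty)
  then show ?case using zS by blast
next
  case (Suc n)
  then obtain z where z: "Q z" "card {y. Q y \<and> y < z} = n" by blast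
  obtain y1 where y1: "Q y1" "z + 1 \<le> y1" using unb by blast
  let ?S = "{y. Q y \<and> z < y \<and> y \<le> y1}"
  have S1: "finite ?S" by (rule finite_subset[OF _ fin[of y1]]) auto
  have "y1 \<in> ?S" using y1 by auto
  then have S: "finite ?S" "?S \<noteq> {}" using S1 by auto
  define z' where "z' = Min ?S"
  have zS: "z' \<in> ?S" unfolding z'_def using Min_in[OF S] .
  have eq: "{y. Q y \<and> y < z'} = insert z {y. Q y \<and> y < z}"
  proof (intro equalityI subsetI)
    fix y assume "y \<in> {y. Q y \<and> y < z'}"
    then have y: "Q y" "y < z'" by auto
    show "y \<in> insert z {y. Q y \<and> y < z}"
    proof (cases "z < y")
      case True
      then have "y \<in> ?S" using y zS by auto
      then have "z' \<le> y" unfolding z'_def using Min_le[OF S(1)] by blast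
      then show ?thesis using y by simp
    qed (use y in auto)
  next
    fix y assume "y \<in> insert z {y. Q y \<and> y < z}"
    then show "y \<in> {y. Q y \<and> y < z'}" using zS z by auto
  qed
  have "finite {y. Q y \<and> y < z}" by (rule finite_subset[OF _ fin[of z]]) auto
  then have "card {y. Q y \<and> y < z'} = Suc n" unfolding eq using z by simp
  then show ?case using zS by blast
qed

lemma enum_unique:
  fixes Q :: "real \<Rightarrow> bool"
  assumes fin: "\<And>R. finite {y. Q y \<and> y \<le> R}"
    and z1: "Q z1" "card {y. Q y \<and> y < z1} = n"
    and z2: "Q z2" "card {y. Q y \<and> y < z2} = n"
  shows "z1 = z2"
proof -
  have *: False if a: "Q a" "Q b" "a < b" "card {y. Q y \<and> y < a} = card {y. Q y \<and> y < b}" for a b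
  proof -
    have "finite {y. Q y \<and> y < b}" by (rule finite_subset[OF _ fin[of b]]) auto
    moreover have "{y. Q y \<and> y < a} \<subset> {y. Q y \<and> y < b}" using a by auto
    ultimately have "card {y. Q y \<and> y < a} < card {y. Q y \<and> y < b}" by (rule psubset_card_mono)
    then show False using a by simp
  qed
  show ?thesis
  proof (rule linorder_cases[of z1 z2])
    assume "z1 < z2" then show ?thesis using *[of z1 z2] z1 z2 by simp
  next
    assume "z2 < z1" then show ?thesis using *[of z2 z1] z1 z2 by simp
  qed
qed

lemma bessel_J_BP:
  assumes nu: "0 \<le> nu" and y: "0 < y"
  shows "bessel_J nu y = (y/2) powr nu * BP nu (y^2)"
proof -
  have t: "(-1)^k / (fact k * Gamma (real k + nu + 1)) * (y/2) powr (2 * real k + nu)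
      = (y/2) powr nu * (bc nu k * (y^2)^k)" for k
  proof -
    have "(y/2) powr (2 * real k + nu) = (y/2) powr nu * (y/2)^(2*k)"
      using y by (simp add: powr_add powr_realpow[symmetric] mult.commute)
    also have "(y/2)^(2*k) = (1/4)^k * (y^2)^k"
      by (simp add: power_mult power_mult_distrib[symmetric] power2_eq_square)
    finally show ?thesis unfolding bc_def by (simp add: mult_ac)
  qed
  show ?thesis unfolding bessel_J_def t BP_def
    by (rule suminf_mult, rule bc_summable[OF nu])
qed

lemma bessel_zero_props:
  assumes nu: "0 \<le> nu" and m: "1 \<le> m"
  shows "0 < bessel_zero nu m \<and> bessel_J nu (bessel_zero nu m) = 0"
proof -
  define Q where "Q y \<longleftrightarrow> 0 < y \<and> bessel_J nu y = 0" for y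
  have QBP: "Q y \<longleftrightarrow> 0 < y \<and> BP nu (y^2) = 0" for y
    unfolding Q_def using bessel_J_BP[OF nu, of y] by auto
  have fin: "finite {y. Q y \<and> y \<le> R}" for R
  proof -
    have "{y. Q y \<and> y \<le> R} \<subseteq> sqrt ` {s. 0 \<le> s \<and> s \<le> R^2 \<and> BP nu s = 0}"
    proof
      fix y assume "y \<in> {y. Q y \<and> y \<le> R}"
      then have y: "0 < y" "y \<le> R" "BP nu (y^2) = 0" unfolding QBP by auto
      then have "y^2 \<le> R^2" by (intro power_mono) auto
      then have "y^2 \<in> {s. 0 \<le> s \<and> s \<le> R^2 \<and> BP nu s = 0}" using y by auto
      moreover have "y = sqrt (y^2)" using y by simp
      ultimately show "y \<in> sqrt ` {s. 0 \<le> s \<and> s \<le> R^2 \<and> BP nu s = 0}" by blast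
    qed
    then show ?thesis by (rule finite_subset) (intro finite_imageI BP_zeros_finite[OF nu])
  qed
  obtain A0 where A0: "A0 > 0" "\<And>A. A \<ge> A0 \<Longrightarrow> \<exists>y. A \<le> y \<and> y \<le> A + 2*pi \<and> BP nu (y^2) = 0"
    using sturm_zero[OF nu] by blast
  have unb: "\<exists>y. Q y \<and> A \<le> y" for A
  proof -
    obtain y where y: "max A A0 \<le> y" "BP nu (y^2) = 0" using A0(2)[of "max A A0"] by auto
    then have "Q y" "A \<le> y" using A0(1) unfolding QBP by auto
    then show ?thesis by blast
  qed
  have setEq: "{y. 0 < y \<and> y < z \<and> bessel_J nu y = 0} = {y. Q y \<and> y < z}" for z
    unfolding Q_def by auto
  obtain z where z: "Q z" "card {y. Q y \<and> y < z} = m - 1"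
    using enum_exists[OF fin unb] by blast
  have ex: "\<exists>!z. 0 < z \<and> bessel_J nu z = 0 \<and> card {y. 0 < y \<and> y < z \<and> bessel_J nu y = 0} = m - 1"
  proof (rule ex1I[of _ z])
    show "0 < z \<and> bessel_J nu z = 0 \<and> card {y. 0 < y \<and> y < z \<and> bessel_J nu y = 0} = m - 1"
      using z unfolding setEq by (simp add: Q_def)
  next
    fix z' assume "0 < z' \<and> bessel_J nu z' = 0 \<and> card {y. 0 < y \<and> y < z' \<and> bessel_J nu y = 0} = m - 1"
    then have "Q z'" "card {y. Q y \<and> y < z'} = m - 1" unfolding setEq by (auto simp: Q_def)
    then show "z' = z" using enum_unique[OF fin _ _ z] by blast
  qed
  show ?thesis using theI'[OF ex] unfolding bessel_zero_def by blast
qed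

lemma IL:
  fixes f h :: "real \<Rightarrow> real"
  assumes hc: "continuous_on {a..b} h" and ab: "-1 \<le> a" "a \<le> b" "b \<le> 1"
    and fe: "\<And>x. x \<in> {-1<..<1} \<Longrightarrow> x \<noteq> a \<Longrightarrow> x \<noteq> b \<Longrightarrow> f x = (if x \<in> {a..b} then h x else 0)"
  shows "set_integrable lebesgue {-1<..<1} f" "(LINT x:{-1<..<1}|lebesgue. f x) = integral {a..b} h"
proof -
  define H where "H x = (if x \<in> {a..b} then h x else 0)" for x
  have "h absolutely_integrable_on {a..b}" by (rule absolutely_integrable_continuous_real[OF hc])
  then have "H absolutely_integrable_on UNIV" unfolding H_def by (subst absolutely_integrable_restrict_UNIV)
  then have Hi: "H absolutely_integrable_on {-1<..<1}" by (rule set_integrable_subset) auto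
  have neg: "negligible {a, b}" by auto
  show fi: "set_integrable lebesgue {-1<..<1} f"
    by (rule absolutely_integrable_spike[OF Hi neg]) (use fe in \<open>auto simp: H_def\<close>)
  have "(LINT x:{-1<..<1}|lebesgue. f x) = integral {-1<..<1} f"
    by (rule set_lebesgue_integral_eq_integral(2)[OF fi])
  also have "\<dots> = integral {-1<..<1} H"
    by (rule integral_spike[OF neg]) (use fe in \<open>auto simp: H_def\<close>)
  also have "\<dots> = integral ({a..b} \<inter> {-1<..<1}) h" unfolding H_def by (rule integral_restrict_Int)
  also have "\<dots> = integral {a..b} h"
  proof (rule integral_spike_set)
    show "negligible {x \<in> {a..b} \<inter> {-1<..<1} - {a..b}. h x \<noteq> 0}"
      by (rule negligible_subset[of "{}"]) auto
    have "{x \<in> {a..b} - {a..b} \<inter> {- 1<..<1}. h x \<noteq> 0} \<subseteq> {-1, 1}" using ab by auto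
    then show "negligible {x \<in> {a..b} - {a..b} \<inter> {- 1<..<1}. h x \<noteq> 0}"
      by (rule negligible_subset[rotated]) auto
  qed
  finally show "(LINT x:{-1<..<1}|lebesgue. f x) = integral {a..b} h" .
qed

lemma L2I:
  fixes u h :: "real \<Rightarrow> real"
  assumes hc: "continuous_on {a..b} h" and ab: "-1 \<le> a" "a \<le> b" "b \<le> 1"
    and fe: "\<And>x. x \<in> {-1<..<1} \<Longrightarrow> x \<noteq> a \<Longrightarrow> x \<noteq> b \<Longrightarrow> u x = (if x \<in> {a..b} then h x else 0)"
  shows "L2_11 u"
proof -
  have "set_integrable lebesgue {-1<..<1} u" by (rule IL(1)[OF hc ab fe])
  then have m: "set_borel_measurable lebesgue {-1<..<1} u"
    unfolding set_integrable_def set_borel_measurable_def by (rule borel_measurable_integrable)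
  have "set_integrable lebesgue {-1<..<1} (\<lambda>x. (u x)^2)"
    by (rule IL(1)[of a b "\<lambda>x. (h x)^2"]) (use ab fe in \<open>auto intro!: continuous_intros hc\<close>)
  then show ?thesis unfolding L2_11_def using m by simp
qed

lemma lip_abs_cont:
  assumes lip: "\<And>x y. x \<in> I \<Longrightarrow> y \<in> I \<Longrightarrow> \<bar>u x - u y\<bar> \<le> L * \<bar>x - y\<bar>" and L: "0 \<le> L"
  shows "abs_cont_on I u"
  unfolding abs_cont_on_def
proof (intro allI impI)
  fix \<epsilon> :: real assume e: "\<epsilon> > 0"
  define \<delta> where "\<delta> = \<epsilon> / (L + 1)"
  have d: "\<delta> > 0" unfolding \<delta>_def using e L by simp
  have Ld: "L * \<delta> < \<epsilon>" unfolding \<delta>_def using e L by (simp add: field_simps)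
  show "\<exists>\<delta>>0. \<forall>(n::nat) (a::nat \<Rightarrow> real) b.
      (\<forall>k<n. a k \<le> b k \<and> {a k..b k} \<subseteq> I) \<and>
      (\<forall>k<n. \<forall>l<n. k \<noteq> l \<longrightarrow> b k \<le> a l \<or> b l \<le> a k) \<and>
      (\<Sum>k<n. b k - a k) < \<delta> \<longrightarrow> (\<Sum>k<n. \<bar>u (b k) - u (a k)\<bar>) < \<epsilon>"
  proof (intro exI[of _ \<delta>] conjI d allI impI)
    fix n :: nat and a b :: "nat \<Rightarrow> real"
    assume H: "(\<forall>k<n. a k \<le> b k \<and> {a k..b k} \<subseteq> I) \<and>
      (\<forall>k<n. \<forall>l<n. k \<noteq> l \<longrightarrow> b k \<le> a l \<or> b l \<le> a k) \<and> (\<Sum>k<n. b k - a k) < \<delta>"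
    have "(\<Sum>k<n. \<bar>u (b k) - u (a k)\<bar>) \<le> (\<Sum>k<n. L * (b k - a k))"
    proof (rule sum_mono)
      fix k assume "k \<in> {..<n}"
      then have "a k \<le> b k \<and> {a k..b k} \<subseteq> I" using H by blast
      then have k: "a k \<le> b k" "a k \<in> I" "b k \<in> I" by auto
      show "\<bar>u (b k) - u (a k)\<bar> \<le> L * (b k - a k)" using lip[OF k(3) k(2)] k(1) by simp
    qed
    also have "\<dots> = L * (\<Sum>k<n. b k - a k)" by (simp add: sum_distrib_left)
    also have "\<dots> \<le> L * \<delta>" using H L by (intro mult_left_mono) auto
    finally show "(\<Sum>k<n. \<bar>u (b k) - u (a k)\<bar>) < \<epsilon>" using Ld by simp
  qed
qed

lemma deriv_lip:
  assumes der: "\<And>x. x \<in> {a..b} \<Longrightarrow> (f has_real_derivative f' x) (at x)"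
    and c: "continuous_on {a..b} f'"
  shows "\<exists>L\<ge>0. \<forall>x\<in>{a..b}. \<forall>y\<in>{a..b}. \<bar>f x - f y\<bar> \<le> L * \<bar>x - y\<bar>"
proof -
  have "bounded (f' ` {a..b})" by (intro compact_imp_bounded compact_continuous_image c compact_Icc)
  then obtain B where "\<forall>y\<in>f' ` {a..b}. norm y \<le> B" unfolding bounded_iff by blast
  then have B: "\<And>x. x \<in> {a..b} \<Longrightarrow> \<bar>f' x\<bar> \<le> B" by auto
  have main: "\<bar>f y - f x\<bar> \<le> max B 0 * \<bar>y - x\<bar>" if xy: "x \<in> {a..b}" "y \<in> {a..b}" "x < y" for x y
  proof -
    have "\<And>t. x \<le> t \<Longrightarrow> t \<le> y \<Longrightarrow> (f has_real_derivative f' t) (at t)" using der xy by auto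
    from MVT2[OF xy(3) this] obtain z where z: "x < z" "z < y" "f y - f x = (y - x) * f' z" by blast
    have "\<bar>f' z\<bar> \<le> max B 0" using B[of z] xy z by auto
    then have "\<bar>y - x\<bar> * \<bar>f' z\<bar> \<le> \<bar>y - x\<bar> * max B 0" by (intro mult_left_mono) auto
    then show ?thesis unfolding z(3) by (simp add: abs_mult mult.commute)
  qed
  show ?thesis
  proof (intro exI[of _ "max B 0"] conjI ballI)
    fix x y assume xy: "x \<in> {a..b}" "y \<in> {a..b}"
    show "\<bar>f x - f y\<bar> \<le> max B 0 * \<bar>x - y\<bar>"
    proof (rule linorder_cases[of x y])
      assume "x < y" then show ?thesis using main[OF xy] by (simp add: abs_minus_commute)
    next
      assume "y < x" then show ?thesis using main[OF xy(2,1)] by simp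
    qed simp
  qed simp
qed

lemma test_fun_facts:
  assumes "test_fun \<phi>"
  shows "\<And>x. (\<phi> has_real_derivative deriv \<phi> x) (at x)" "continuous_on S (deriv \<phi>)"
    "continuous_on S \<phi>" "\<phi> 1 = 0" "\<phi> (-1) = 0"
proof -
  have d0: "\<phi> differentiable (at x)" for x using assms unfolding test_fun_def
    by (metis funpow_0)
  have d1: "deriv \<phi> differentiable (at x)" for x using assms unfolding test_fun_def
    by (metis funpow_0 funpow_Suc_right comp_apply One_nat_def)
  show "(\<phi> has_real_derivative deriv \<phi> x) (at x)" for x
    using d0 DERIV_deriv_iff_real_differentiable by blast
  show "continuous_on S (deriv \<phi>)"
    using d1 by (meson continuous_at_imp_continuous_on differentiable_imp_continuous_within)
  show "continuous_on S \<phi>"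
    using d0 by (meson continuous_at_imp_continuous_on differentiable_imp_continuous_within)
  obtain a b where ab: "-1 < a" "a \<le> b" "b < 1" "\<And>x. x \<notin> {a..b} \<Longrightarrow> \<phi> x = 0"
    using assms unfolding test_fun_def by blast
  show "\<phi> 1 = 0" using ab(3) ab(4)[of 1] by simp
  show "\<phi> (-1) = 0" using ab(1) ab(4)[of "-1"] by simp
qed

lemma AE_ne0: "AE x in lebesgue. (x::real) \<noteq> 0"
  by (rule AE_completion[OF AE_lborel_singleton])

lemma abstract_r:
  fixes G G1 Hq Ws :: "real \<Rightarrow> real" and \<alpha> lam :: real
  assumes dG: "\<And>x. 0 < x \<Longrightarrow> (G has_real_derivative G1 x) (at x)"
    and cG: "continuous_on {0..1} G"
    and cG1: "continuous_on {0<..} G1"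
    and G1z: "G 1 = 0"
    and HqE: "\<And>x. 0 < x \<Longrightarrow> x < 1 \<Longrightarrow> x powr \<alpha> * G1 x = Hq x"
    and cHq: "continuous_on {0..1} Hq" and Hq0: "Hq 0 = 0"
    and dHq: "\<And>x. 0 < x \<Longrightarrow> x < 1 \<Longrightarrow> (Hq has_real_derivative - lam * G x) (at x)"
    and WsE: "\<And>x. 0 < x \<Longrightarrow> x < 1 \<Longrightarrow> x powr \<alpha> * (G1 x)^2 = Ws x"
    and cWs: "continuous_on {0..1} Ws"
  shows "(\<lambda>x. if 0 < x \<and> x < 1 then G x else 0) \<in> H2_alpha \<alpha>"
proof -
  define u where "u x = (if 0 < x \<and> x < 1 then G x else 0)" for x
  define g where "g x = (if 0 < x \<and> x < 1 then G1 x else 0)" for x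
  have L2u: "L2_11 u" by (rule L2I[of 0 1 G]) (auto simp: u_def cG)
  have aed: "ae_deriv u g" unfolding ae_deriv_def
  proof (rule eventually_mono[OF AE_ne0], intro impI)
    fix x :: real assume x0: "x \<noteq> 0" and x: "x \<in> {-1<..<1}"
    show "(u has_real_derivative g x) (at x)"
    proof (cases "x > 0")
      case True
      then have "(u has_real_derivative G1 x) (at x)"
        by (intro has_field_derivative_transform_within_open[OF dG[of x], of "{0<..<1}"]) (use x in \<open>auto simp: u_def\<close>)
      then show ?thesis using True x by (simp add: g_def)
    next
      case False
      then have "(u has_real_derivative 0) (at x)"
        by (intro has_field_derivative_transform_within_open[OF DERIV_const[of 0 "at x"], of "{..<0}"]) (use x0 in \<open>auto simp: u_def\<close>)
      then show ?thesis using False by (simp add: g_def)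
    qed
  qed
  have wint: "set_integrable lebesgue {-1<..<1} (\<lambda>x. \<bar>x\<bar> powr \<alpha> * (g x)^2)"
    by (rule IL(1)[of 0 1 Ws]) (auto simp: g_def cWs WsE)
  have lac1: "loc_abs_cont_on {0<..1} u" unfolding loc_abs_cont_on_def
  proof (intro allI impI)
    fix a b :: real assume ab: "a \<le> b \<and> {a..b} \<subseteq> {0<..1}"
    then have a0: "0 < a" and b1: "b \<le> 1" by auto
    have "\<exists>L\<ge>0. \<forall>x\<in>{a..b}. \<forall>y\<in>{a..b}. \<bar>G x - G y\<bar> \<le> L * \<bar>x - y\<bar>"
      by (rule deriv_lip) (use a0 in \<open>auto intro: dG continuous_on_subset[OF cG1]\<close>)
    then obtain L where L: "L \<ge> 0" "\<forall>x\<in>{a..b}. \<forall>y\<in>{a..b}. \<bar>G x - G y\<bar> \<le> L * \<bar>x - y\<bar>" by blast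
    have uG: "u x = G x" if "x \<in> {a..b}" for x
    proof (cases "x < 1")
      case False
      then have "x = 1" using that b1 by auto
      then show ?thesis using G1z by (simp add: u_def)
    qed (use that a0 in \<open>auto simp: u_def\<close>)
    show "abs_cont_on {a..b} u" by (rule lip_abs_cont[OF _ L(1)]) (use L(2) uG in auto)
  qed
  have lac2: "loc_abs_cont_on {-1..<0} u" unfolding loc_abs_cont_on_def
  proof (intro allI impI)
    fix a b :: real assume ab: "a \<le> b \<and> {a..b} \<subseteq> {-1..<0}"
    then have "b < 0" by auto
    then have "u x = 0" if "x \<in> {a..b}" for x using that by (auto simp: u_def)
    then show "abs_cont_on {a..b} u" by (intro lip_abs_cont[of _ _ 0]) auto
  qed
  have H1: "u \<in> H1_alpha \<alpha>" unfolding H1_alpha_def using L2u lac1 lac2 aed wint by (auto simp: u_def)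
  define w where "w x = - lam * u x" for x
  have L2w: "L2_11 w" unfolding w_def
    by (rule L2I[of 0 1 "\<lambda>x. - lam * G x"]) (auto simp: u_def intro!: continuous_intros cG)
  have weak: "(LINT x:{-1<..<1}|lebesgue. \<bar>x\<bar> powr \<alpha> * g x * deriv \<phi> x)
             = - (LINT x:{-1<..<1}|lebesgue. w x * \<phi> x)" if phi: "test_fun \<phi>" for \<phi>
  proof -
    note tf = test_fun_facts[OF phi]
    have ch: "continuous_on {0..1} (\<lambda>x. Hq x * deriv \<phi> x)" by (intro continuous_intros cHq tf(2))
    have cw: "continuous_on {0..1} (\<lambda>x. - lam * G x * \<phi> x)" by (intro continuous_intros cG tf(3))
    have l: "(LINT x:{-1<..<1}|lebesgue. \<bar>x\<bar> powr \<alpha> * g x * deriv \<phi> x) = integral {0..1} (\<lambda>x. Hq x * deriv \<phi> x)"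
      by (rule IL(2)[OF ch]) (auto simp: g_def HqE[symmetric])
    have r: "(LINT x:{-1<..<1}|lebesgue. w x * \<phi> x) = integral {0..1} (\<lambda>x. - lam * G x * \<phi> x)"
      by (rule IL(2)[OF cw]) (auto simp: w_def u_def)
    have "((\<lambda>x. - lam * G x * \<phi> x + Hq x * deriv \<phi> x) has_integral (Hq 1 * \<phi> 1 - Hq 0 * \<phi> 0)) {0..1}"
    proof (rule fundamental_theorem_of_calculus_interior)
      show "continuous_on {0..1} (\<lambda>x. Hq x * \<phi> x)" by (intro continuous_intros cHq tf(3))
      fix x :: real assume "x \<in> {0<..<1}"
      then have "((\<lambda>x. Hq x * \<phi> x) has_real_derivative - lam * G x * \<phi> x + Hq x * deriv \<phi> x) (at x)"
        using DERIV_mult[OF dHq[of x] tf(1)[of x]] by (simp add: mult.commute)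
      then show "((\<lambda>x. Hq x * \<phi> x) has_vector_derivative - lam * G x * \<phi> x + Hq x * deriv \<phi> x) (at x)"
        unfolding has_real_derivative_iff_has_vector_derivative .
    qed simp
    then have "integral {0..1} (\<lambda>x. - lam * G x * \<phi> x + Hq x * deriv \<phi> x) = 0"
      using tf(4) Hq0 by (simp add: integral_unique)
    moreover have "integral {0..1} (\<lambda>x. - lam * G x * \<phi> x + Hq x * deriv \<phi> x)
        = integral {0..1} (\<lambda>x. - lam * G x * \<phi> x) + integral {0..1} (\<lambda>x. Hq x * deriv \<phi> x)"
      by (intro integral_add integrable_continuous_interval cw ch)
    ultimately show ?thesis unfolding l r by linarith
  qed
  have "u \<in> H2_alpha \<alpha>" unfolding H2_alpha_def using H1 aed L2w weak by blast
  then show ?thesis unfolding u_def .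
qed

lemma cont_refl:
  fixes f :: "real \<Rightarrow> real"
  assumes "continuous_on {0..1} f" shows "continuous_on {-1..0} (\<lambda>x. f (- x))"
proof -
  have c: "continuous_on {-1..0} (\<lambda>x::real. -x)" by (intro continuous_intros)
  have i: "(\<lambda>x::real. -x) ` {-1..0} \<subseteq> {0..1}" by auto
  show ?thesis using continuous_on_compose2[OF assms c i] by simp
qed

lemma abstract_l:
  fixes G G1 Hq Ws :: "real \<Rightarrow> real" and \<alpha> lam :: real
  assumes dG: "\<And>x. 0 < x \<Longrightarrow> (G has_real_derivative G1 x) (at x)"
    and cG: "continuous_on {0..1} G"
    and cG1: "continuous_on {0<..} G1"
    and G1z: "G 1 = 0"
    and HqE: "\<And>x. 0 < x \<Longrightarrow> x < 1 \<Longrightarrow> x powr \<alpha> * G1 x = Hq x"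
    and cHq: "continuous_on {0..1} Hq" and Hq0: "Hq 0 = 0"
    and dHq: "\<And>x. 0 < x \<Longrightarrow> x < 1 \<Longrightarrow> (Hq has_real_derivative - lam * G x) (at x)"
    and WsE: "\<And>x. 0 < x \<Longrightarrow> x < 1 \<Longrightarrow> x powr \<alpha> * (G1 x)^2 = Ws x"
    and cWs: "continuous_on {0..1} Ws"
  shows "(\<lambda>x. if -1 < x \<and> x < 0 then G (-x) else 0) \<in> H2_alpha \<alpha>"
proof -
  define u where "u x = (if -1 < x \<and> x < 0 then G (-x) else 0)" for x
  define g where "g x = (if -1 < x \<and> x < 0 then - G1 (-x) else 0)" for x
  have dGm: "((\<lambda>x. G (-x)) has_real_derivative - G1 (-x)) (at x)" if "x < 0" for x
    using DERIV_chain2[OF dG[of "-x"] DERIV_minus[OF DERIV_ident]] that by simp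
  have L2u: "L2_11 u" by (rule L2I[of "-1" 0 "\<lambda>x. G (-x)"]) (auto simp: u_def cont_refl[OF cG])
  have aed: "ae_deriv u g" unfolding ae_deriv_def
  proof (rule eventually_mono[OF AE_ne0], intro impI)
    fix x :: real assume x0: "x \<noteq> 0" and x: "x \<in> {-1<..<1}"
    show "(u has_real_derivative g x) (at x)"
    proof (cases "x < 0")
      case True
      then have "(u has_real_derivative - G1 (-x)) (at x)"
        by (intro has_field_derivative_transform_within_open[OF dGm[of x], of "{-1<..<0}"]) (use x in \<open>auto simp: u_def\<close>)
      then show ?thesis using True x by (simp add: g_def)
    next
      case False
      then have "(u has_real_derivative 0) (at x)"
        by (intro has_field_derivative_transform_within_open[OF DERIV_const[of 0 "at x"], of "{0<..}"]) (use x0 in \<open>auto simp: u_def\<close>)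
      then show ?thesis using False by (simp add: g_def)
    qed
  qed
  have wint: "set_integrable lebesgue {-1<..<1} (\<lambda>x. \<bar>x\<bar> powr \<alpha> * (g x)^2)"
    by (rule IL(1)[of "-1" 0 "\<lambda>x. Ws (-x)"]) (auto simp: g_def cont_refl[OF cWs] WsE)
  have lac1: "loc_abs_cont_on {0<..1} u" unfolding loc_abs_cont_on_def
  proof (intro allI impI)
    fix a b :: real assume ab: "a \<le> b \<and> {a..b} \<subseteq> {0<..1}"
    then have "0 < a" by auto
    then have "u x = 0" if "x \<in> {a..b}" for x using that by (auto simp: u_def)
    then show "abs_cont_on {a..b} u" by (intro lip_abs_cont[of _ _ 0]) auto
  qed
  have lac2: "loc_abs_cont_on {-1..<0} u" unfolding loc_abs_cont_on_def
  proof (intro allI impI)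
    fix a b :: real assume ab: "a \<le> b \<and> {a..b} \<subseteq> {-1..<0}"
    then have a1: "-1 \<le> a" and b0: "b < 0" by auto
    have cc: "continuous_on {a..b} (\<lambda>x. - G1 (-x))"
      by (intro continuous_intros continuous_on_compose2[OF cG1, of _ uminus]) (use b0 in auto)
    have "\<exists>L\<ge>0. \<forall>x\<in>{a..b}. \<forall>y\<in>{a..b}. \<bar>G (-x) - G (-y)\<bar> \<le> L * \<bar>x - y\<bar>"
      by (rule deriv_lip[OF _ cc]) (use b0 in \<open>auto intro: dGm\<close>)
    then obtain L where L: "L \<ge> 0" "\<forall>x\<in>{a..b}. \<forall>y\<in>{a..b}. \<bar>G (-x) - G (-y)\<bar> \<le> L * \<bar>x - y\<bar>" by blast
    have uG: "u x = G (-x)" if "x \<in> {a..b}" for x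
    proof (cases "-1 < x")
      case False
      then have "x = -1" using that a1 by auto
      then show ?thesis using G1z by (simp add: u_def)
    qed (use that b0 in \<open>auto simp: u_def\<close>)
    show "abs_cont_on {a..b} u" by (rule lip_abs_cont[OF _ L(1)]) (use L(2) uG in auto)
  qed
  have H1: "u \<in> H1_alpha \<alpha>" unfolding H1_alpha_def using L2u lac1 lac2 aed wint by (auto simp: u_def)
  define w where "w x = - lam * u x" for x
  have L2w: "L2_11 w" unfolding w_def
    by (rule L2I[of "-1" 0 "\<lambda>x. - lam * G (-x)"]) (auto simp: u_def intro!: continuous_intros cont_refl[OF cG])
  have weak: "(LINT x:{-1<..<1}|lebesgue. \<bar>x\<bar> powr \<alpha> * g x * deriv \<phi> x)
             = - (LINT x:{-1<..<1}|lebesgue. w x * \<phi> x)" if phi: "test_fun \<phi>" for \<phi>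
  proof -
    note tf = test_fun_facts[OF phi]
    have ch: "continuous_on {-1..0} (\<lambda>x. - Hq (-x) * deriv \<phi> x)"
      by (intro continuous_intros cont_refl[OF cHq] tf(2))
    have cw: "continuous_on {-1..0} (\<lambda>x. - lam * G (-x) * \<phi> x)"
      by (intro continuous_intros cont_refl[OF cG] tf(3))
    have l: "(LINT x:{-1<..<1}|lebesgue. \<bar>x\<bar> powr \<alpha> * g x * deriv \<phi> x) = integral {-1..0} (\<lambda>x. - Hq (-x) * deriv \<phi> x)"
      by (rule IL(2)[OF ch]) (auto simp: g_def HqE[symmetric])
    have r: "(LINT x:{-1<..<1}|lebesgue. w x * \<phi> x) = integral {-1..0} (\<lambda>x. - lam * G (-x) * \<phi> x)"
      by (rule IL(2)[OF cw]) (auto simp: w_def u_def)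
    have "((\<lambda>x. - lam * G (-x) * \<phi> x + - Hq (-x) * deriv \<phi> x) has_integral
           (- Hq (- 0) * \<phi> 0 - (- Hq (- (-1)) * \<phi> (-1)))) {-1..0}"
    proof (rule fundamental_theorem_of_calculus_interior)
      show "continuous_on {-1..0} (\<lambda>x. - Hq (-x) * \<phi> x)"
        by (intro continuous_intros cont_refl[OF cHq] tf(3))
      fix x :: real assume x: "x \<in> {-1<..<0}"
      have "((\<lambda>x. Hq (-x)) has_real_derivative (- lam * G (-x)) * (-1)) (at x)"
        using DERIV_chain2[OF dHq[of "-x"] DERIV_minus[OF DERIV_ident]] x by simp
      from DERIV_mult[OF DERIV_minus[OF this] tf(1)[of x]]
      have "((\<lambda>x. - Hq (-x) * \<phi> x) has_real_derivative - lam * G (-x) * \<phi> x + - Hq (-x) * deriv \<phi> x) (at x)"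
        by (simp add: mult.commute)
      then show "((\<lambda>x. - Hq (-x) * \<phi> x) has_vector_derivative - lam * G (-x) * \<phi> x + - Hq (-x) * deriv \<phi> x) (at x)"
        unfolding has_real_derivative_iff_has_vector_derivative .
    qed simp
    then have "integral {-1..0} (\<lambda>x. - lam * G (-x) * \<phi> x + - Hq (-x) * deriv \<phi> x) = 0"
      using tf(5) Hq0 by (simp add: integral_unique)
    moreover have "integral {-1..0} (\<lambda>x. - lam * G (-x) * \<phi> x + - Hq (-x) * deriv \<phi> x)
        = integral {-1..0} (\<lambda>x. - lam * G (-x) * \<phi> x) + integral {-1..0} (\<lambda>x. - Hq (-x) * deriv \<phi> x)"
      by (intro integral_add integrable_continuous_interval cw ch)
    ultimately show ?thesis unfolding l r by linarith
  qed
  have "u \<in> H2_alpha \<alpha>" unfolding H2_alpha_def using H1 aed L2w weak by blast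
  then show ?thesis unfolding u_def .
qed

lemma bessel_G_facts:
  fixes \<alpha> :: real and m :: nat
  assumes a1: "1 \<le> \<alpha>" and a2: "\<alpha> < 2" and m: "1 \<le> m"
  defines "nu \<equiv> nu_a \<alpha>" and "\<beta> \<equiv> 2 - \<alpha>"
  defines "j \<equiv> bessel_zero nu m"
  defines "C \<equiv> (j/2) powr nu" and "\<mu> \<equiv> j^2"
  defines "G \<equiv> \<lambda>x. C * BP nu (\<mu> * x powr \<beta>)"
  shows "Phi_r \<alpha> m = (\<lambda>x. if 0 < x \<and> x < 1 then G x else 0)"
    and "Phi_l \<alpha> m = (\<lambda>x. if -1 < x \<and> x < 0 then G (-x) else 0)"
    and "Phi_r \<alpha> m \<in> H2_alpha \<alpha> \<and> Phi_l \<alpha> m \<in> H2_alpha \<alpha>"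
proof -
  have nu0: "0 \<le> nu" unfolding nu_def nu_a_def using a1 a2 by simp
  have b0: "0 < \<beta>" unfolding \<beta>_def using a2 by simp
  have bnu: "\<beta> * (nu + 1) = 1" unfolding \<beta>_def nu_def nu_a_def using a2 by (simp add: field_simps)
  have ab: "\<alpha> + \<beta> - 1 = 1" unfolding \<beta>_def by simp
  from bessel_zero_props[OF nu0 m] have j0: "0 < j" and jz: "bessel_J nu j = 0"
    unfolding j_def by auto
  have C0: "C > 0" unfolding C_def using j0 by simp
  have BPj: "BP nu \<mu> = 0"
    using jz bessel_J_BP[OF nu0 j0] j0 unfolding \<mu>_def by simp
  have Geq: "x powr ((1 - \<alpha>) / 2) * bessel_J nu (j * x powr kappa_a \<alpha>) = G x" if x: "0 < x" for x
  proof -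
    let ?y = "j * x powr kappa_a \<alpha>"
    have y0: "0 < ?y" using j0 x by simp
    have k2: "2 * kappa_a \<alpha> = \<beta>" unfolding kappa_a_def \<beta>_def by simp
    have kn: "kappa_a \<alpha> * nu = (\<alpha> - 1) / 2" unfolding kappa_a_def nu_def nu_a_def using a2 by (simp add: field_simps)
    have "(?y/2) powr nu = C * x powr (kappa_a \<alpha> * nu)"
    proof -
      have e: "?y/2 = (j/2) * x powr kappa_a \<alpha>" by simp
      have "((j/2) * x powr kappa_a \<alpha>) powr nu = (j/2) powr nu * (x powr kappa_a \<alpha>) powr nu"
        using j0 x by (metis powr_mult powr_ge_zero less_le divide_nonneg_pos zero_less_numeral)
      then have "(?y/2) powr nu = (j/2) powr nu * (x powr kappa_a \<alpha>) powr nu"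
        unfolding e .
      then show ?thesis unfolding C_def by (simp add: powr_powr)
    qed
    moreover have "?y^2 = \<mu> * x powr \<beta>"
    proof -
      have sq: "x powr kappa_a \<alpha> * x powr kappa_a \<alpha> = x powr \<beta>"
        unfolding k2[symmetric] mult_2 by (rule powr_add[symmetric])
      have "?y^2 = j^2 * (x powr kappa_a \<alpha> * x powr kappa_a \<alpha>)" by (simp only: power2_eq_square mult_ac)
      also have "\<dots> = \<mu> * x powr \<beta>" unfolding sq \<mu>_def ..
      finally show ?thesis .
    qed
    moreover have "x powr ((1 - \<alpha>) / 2) * x powr (kappa_a \<alpha> * nu) = 1"
    proof -
      have "x powr ((1 - \<alpha>) / 2) * x powr ((\<alpha> - 1) / 2) = x powr ((1 - \<alpha>) / 2 + (\<alpha> - 1) / 2)"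
        by (rule powr_add[symmetric])
      also have "(1 - \<alpha>) / 2 + (\<alpha> - 1) / 2 = 0" by (simp add: field_simps)
      finally show ?thesis unfolding kn using x by simp
    qed
    ultimately show ?thesis unfolding bessel_J_BP[OF nu0 y0] G_def
    proof -
      assume A: "(?y/2) powr nu = C * x powr (kappa_a \<alpha> * nu)" and B: "?y^2 = \<mu> * x powr \<beta>"
        and Cc: "x powr ((1 - \<alpha>) / 2) * x powr (kappa_a \<alpha> * nu) = 1"
      have "x powr ((1 - \<alpha>) / 2) * (C * x powr (kappa_a \<alpha> * nu) * BP nu (\<mu> * x powr \<beta>))
         = (x powr ((1 - \<alpha>) / 2) * x powr (kappa_a \<alpha> * nu)) * (C * BP nu (\<mu> * x powr \<beta>))"
        by (simp only: mult_ac)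
      then show "x powr ((1 - \<alpha>) / 2) * ((?y/2) powr nu * BP nu (?y^2)) = C * BP nu (\<mu> * x powr \<beta>)"
        unfolding A B Cc by simp
    qed
  qed
  show r: "Phi_r \<alpha> m = (\<lambda>x. if 0 < x \<and> x < 1 then G x else 0)"
    unfolding Phi_r_def nu_def[symmetric] j_def[symmetric] by (intro ext) (auto simp: Geq)
  show l: "Phi_l \<alpha> m = (\<lambda>x. if -1 < x \<and> x < 0 then G (-x) else 0)"
    unfolding Phi_l_def nu_def[symmetric] j_def[symmetric] by (intro ext) (auto simp: Geq)
  define G1 where "G1 x = C * (BP1 nu (\<mu> * x powr \<beta>) * (\<mu> * (\<beta> * x powr (\<beta> - 1))))" for x
  define Hq where "Hq x = C * \<mu> * \<beta> * (x * BP1 nu (\<mu> * x powr \<beta>))" for x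
  define Ws where "Ws x = (C * \<mu> * \<beta>)^2 * (x powr \<beta> * (BP1 nu (\<mu> * x powr \<beta>))^2)" for x
  define lam where "lam = \<mu> * \<beta>^2 / 4"
  have cp: "continuous_on {0..1} (\<lambda>x::real. x powr \<beta>)"
    by (rule continuous_on_powr') (use b0 in \<open>auto intro: continuous_intros\<close>)
  have dG: "(G has_real_derivative G1 x) (at x)" if x: "0 < x" for x
    unfolding G_def G1_def
    by (intro DERIV_cmult BP_chain[OF nu0] has_real_derivative_powr x)
  have cG: "continuous_on {0..1} G" unfolding G_def by (intro continuous_intros cp nu0)
  have cG1: "continuous_on {0<..} G1" unfolding G1_def by (intro continuous_intros nu0) auto
  have G1z: "G 1 = 0" unfolding G_def using BPj by simp
  have xp: "x * x powr (\<beta> - 1) = x powr \<beta>" if "0 < x" for x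
    using that by (simp add: powr_diff)
  have HqE: "x powr \<alpha> * G1 x = Hq x" if "0 < x" for x
  proof -
    have "x powr \<alpha> * x powr (\<beta> - 1) = x powr (\<alpha> + (\<beta> - 1))" by (rule powr_add[symmetric])
    also have "\<alpha> + (\<beta> - 1) = 1" using ab by simp
    finally have "x powr \<alpha> * x powr (\<beta> - 1) = x" using that by simp
    then show ?thesis unfolding G1_def Hq_def by (simp add: mult_ac)
  qed
  have cHq: "continuous_on {0..1} Hq" unfolding Hq_def by (intro continuous_intros cp nu0)
  have Hq0: "Hq 0 = 0" unfolding Hq_def by simp
  have dHq: "(Hq has_real_derivative - lam * G x) (at x)" if x: "0 < x" for x
  proof -
    let ?s = "\<mu> * x powr \<beta>"
    have d: "(Hq has_real_derivative C * \<mu> * \<beta> * (1 * BP1 nu ?s + BP2 nu ?s * (\<mu> * (\<beta> * x powr (\<beta> - 1))) * x)) (at x)"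
      unfolding Hq_def
      by (rule DERIV_cmult[OF DERIV_mult[OF DERIV_ident BP1_chain[OF nu0 DERIV_cmult[OF has_real_derivative_powr[OF x, of \<beta>], of \<mu>]]]])
    have ode: "?s * BP2 nu ?s = - (nu + 1) * BP1 nu ?s - BP nu ?s / 4"
      using BP_ode[OF nu0, of ?s] by (simp add: algebra_simps)
    have "1 * BP1 nu ?s + BP2 nu ?s * (\<mu> * (\<beta> * x powr (\<beta> - 1))) * x
        = BP1 nu ?s + \<beta> * (?s * BP2 nu ?s)"
      using xp[OF x] by (simp add: mult_ac)
    also have "\<dots> = BP1 nu ?s - \<beta> * (nu + 1) * BP1 nu ?s - \<beta> * BP nu ?s / 4"
      unfolding ode by (simp add: algebra_simps)
    also have "\<dots> = - \<beta> * BP nu ?s / 4" unfolding bnu by simp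
    finally have "C * \<mu> * \<beta> * (1 * BP1 nu ?s + BP2 nu ?s * (\<mu> * (\<beta> * x powr (\<beta> - 1))) * x) = - lam * G x"
      unfolding lam_def G_def by (simp add: power2_eq_square mult_ac)
    then show ?thesis using d by simp
  qed
  have WsE: "x powr \<alpha> * (G1 x)^2 = Ws x" if x: "0 < x" for x
  proof -
    have "x powr \<alpha> * (G1 x)^2 = Hq x * G1 x" using HqE[OF x] by (simp add: power2_eq_square mult_ac)
    also have "\<dots> = (C * \<mu> * \<beta>)^2 * ((x * x powr (\<beta> - 1)) * (BP1 nu (\<mu> * x powr \<beta>))^2)"
      unfolding Hq_def G1_def by (simp add: power2_eq_square mult_ac)
    also have "\<dots> = Ws x" unfolding Ws_def xp[OF x] ..
    finally show ?thesis .
  qed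
  have cWs: "continuous_on {0..1} Ws" unfolding Ws_def by (intro continuous_intros cp nu0)
  show "Phi_r \<alpha> m \<in> H2_alpha \<alpha> \<and> Phi_l \<alpha> m \<in> H2_alpha \<alpha>"
    unfolding r l
    using abstract_r[OF dG cG cG1 G1z HqE cHq Hq0 dHq WsE cWs]
          abstract_l[OF dG cG cG1 G1z HqE cHq Hq0 dHq WsE cWs] by auto
qed

theorem lemma4p3:
  fixes \<alpha> :: real and m :: nat
  assumes "1 \<le> \<alpha>" and "\<alpha> < 2" and "1 \<le> m"
  shows "Phi_r \<alpha> m \<in> H2_alpha \<alpha> \<and> Phi_l \<alpha> m \<in> H2_alpha \<alpha>"
  using bessel_G_facts(3)[OF assms] .

end
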